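(* Let $d\ge1$ and let $Z_1,Z_2$ be two nonzero $d$-cycles over the vertex set $[d+4]$. Then there is a $(d-1)$-simplex belonging to both $K(\mathrm{Supp}(Z_1))$ and $K(\mathrm{Supp}(Z_2))$.
   Context: Fix a field $\mathbb F$. A $d$-simplex is a $(d+1)$-element subset of the vertex set, oriented by increasing order $s_1<\dots<s_{d+1}$. A $d$-chain is a formal $\mathbb F$-combination of $d$-simplices with support the set of simplices with nonzero coefficient; $\partial\sigma=\sum_i(-1)^{i-1}(\sigma\setminus\{s_i\})$ extended linearly; a $d$-cycle is a $d$-chain $Z$ with $\partial Z=0$. For a set $S$ of simplices, $K(S)$ is the complex of all subsets of members of $S$. *)

theory Defs
  imports Main
begin

definition simplices :: "nat \<Rightarrow> nat \<Rightarrow> nat set set" where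
  "simplices n d = {s. s \<subseteq> {1..n} \<and> card s = d + 1}"

definition is_chain :: "nat \<Rightarrow> nat \<Rightarrow> (nat set \<Rightarrow> 'a::field) \<Rightarrow> bool" where
  "is_chain n d c \<longleftrightarrow> (\<forall>s. c s \<noteq> 0 \<longrightarrow> s \<in> simplices n d)"

definition supp :: "(nat set \<Rightarrow> 'a::zero) \<Rightarrow> nat set set" where
  "supp c = {s. c s \<noteq> 0}"

(* boundary of a d-chain: linear extension of
   \<partial>\<sigma> = \<Sum>_i (-1)^(i-1) (\<sigma> - {s_i}), s_1 < ... < s_{d+1};
   the result is given as a coefficient function on (d-1)-simplices *)
definition boundary :: "nat \<Rightarrow> nat \<Rightarrow> (nat set \<Rightarrow> 'a::field) \<Rightarrow> (nat set \<Rightarrow> 'a)" where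
  "boundary n d c = (\<lambda>\<tau>. \<Sum>\<sigma>\<in>simplices n d.
      \<Sum>i<card \<sigma>. (if \<sigma> - {sorted_list_of_set \<sigma> ! i} = \<tau>
                     then (-1) ^ i * c \<sigma> else 0))"

definition is_cycle :: "nat \<Rightarrow> nat \<Rightarrow> (nat set \<Rightarrow> 'a::field) \<Rightarrow> bool" where
  "is_cycle n d c \<longleftrightarrow> is_chain n d c \<and> (\<forall>\<tau>. boundary n d c \<tau> = 0)"

definition K :: "nat set set \<Rightarrow> nat set set" where
  "K S = {t. \<exists>s\<in>S. t \<subseteq> s}"

end

theory Submission
  imports Defs
begin

lemma two_le_int:
  assumes "x \<noteq> y" "x \<in> S" "y \<in> S" "x \<in> T" "y \<in> T" "finite S"
  shows "2 \<le> card (S \<inter> T)"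
proof -
  have "{x,y} \<subseteq> S \<inter> T" using assms by auto
  hence "card {x,y} \<le> card (S \<inter> T)" using assms(6) by (intro card_mono) auto
  thus ?thesis using assms(1) by simp
qed

locale exch =
  fixes U :: "nat set" and C1 C2 :: "nat set set"
  assumes fin: "finite U"
  and c1: "\<And>A. A \<in> C1 \<Longrightarrow> card A = 3 \<and> A \<subseteq> U"
  and c2: "\<And>A. A \<in> C2 \<Longrightarrow> card A = 3 \<and> A \<subseteq> U"
  and e1: "\<And>A v. A \<in> C1 \<Longrightarrow> v \<notin> A \<Longrightarrow> v \<in> U \<Longrightarrow> \<exists>w\<in>A. insert v (A - {w}) \<in> C1"
  and e2: "\<And>A v. A \<in> C2 \<Longrightarrow> v \<notin> A \<Longrightarrow> v \<in> U \<Longrightarrow> \<exists>w\<in>A. insert v (A - {w}) \<in> C2"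
begin

definition good where "good \<longleftrightarrow> (\<exists>A\<in>C1. \<exists>B\<in>C2. 2 \<le> card (A \<inter> B))"

lemma case1:
  assumes A: "A \<in> C1" and B: "B \<in> C2" and i: "card (A \<inter> B) = 1"
  shows good
proof (rule ccontr)
  assume ng: "\<not> good"
  have fA: "finite A" using c1[OF A] fin finite_subset by blast
  have fB: "finite B" using c2[OF B] fin finite_subset by blast
  obtain a where a: "A \<inter> B = {a}" using i by (rule card_1_singletonE)
  have "card (A - {a}) = 2" using c1[OF A] a fA by (simp add: card_Diff_singleton_if) blast
  then obtain x y where xy: "A - {a} = {x,y}" "x \<noteq> y" by (auto simp: card_2_iff)
  have "card (B - {a}) = 2" using c2[OF B] a fB by (simp add: card_Diff_singleton_if) blast
  then obtain p q where pq: "B - {a} = {p,q}" "p \<noteq> q" by (auto simp: card_2_iff)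
  have Aeq: "A = {a,x,y}" using xy a by blast
  have Beq: "B = {a,p,q}" using pq a by blast
  have dis: "x \<noteq> p" "x \<noteq> q" "y \<noteq> p" "y \<noteq> q" "a \<noteq> x" "a \<noteq> y" "a \<noteq> p" "a \<noteq> q"
    using a xy pq by (metis Diff_iff Int_iff insertCI singletonD)+
  have U: "a \<in> U" "x \<in> U" "y \<in> U" "p \<in> U" "q \<in> U" using c1[OF A] c2[OF B] Aeq Beq by auto
  have nice: "\<And>S T u v. S \<in> C1 \<Longrightarrow> T \<in> C2 \<Longrightarrow> u \<noteq> v \<Longrightarrow> u \<in> S \<Longrightarrow> v \<in> S \<Longrightarrow> u \<in> T \<Longrightarrow> v \<in> T \<Longrightarrow> False"
  proof -
    fix S T u v assume "S \<in> C1" "T \<in> C2" "u \<noteq> v" "u \<in> S" "v \<in> S" "u \<in> T" "v \<in> T"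
    moreover have "finite S" using c1 \<open>S \<in> C1\<close> fin finite_subset by blast
    ultimately have "2 \<le> card (S \<inter> T)" using two_le_int by metis
    thus False using ng \<open>S \<in> C1\<close> \<open>T \<in> C2\<close> unfolding good_def by blast
  qed
  have xyp: "{x,y,p} \<in> C1"
  proof -
    have "p \<notin> A" using Aeq dis by auto
    then obtain w where w: "w \<in> A" "insert p (A - {w}) \<in> C1" using e1[OF A _ U(4)] by blast
    show ?thesis
    proof (cases "w = a")
      case True thus ?thesis using w Aeq dis by (simp add: insert_commute insert_Diff_if)
    next
      case False
      hence "a \<in> insert p (A - {w})" "p \<in> insert p (A - {w})" using Aeq by auto
      moreover have "a \<in> B" "p \<in> B" using Beq by auto
      ultimately show ?thesis using nice[OF w(2) B, of a p] dis by blast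
    qed
  qed
  have pqx: "{p,q,x} \<in> C2"
  proof -
    have "x \<notin> B" using Beq dis by auto
    then obtain w where w: "w \<in> B" "insert x (B - {w}) \<in> C2" using e2[OF B _ U(2)] by blast
    show ?thesis
    proof (cases "w = a")
      case True thus ?thesis using w Beq dis by (auto simp: insert_commute insert_Diff_if)
    next
      case False
      hence "a \<in> insert x (B - {w})" "x \<in> insert x (B - {w})" using Beq by auto
      moreover have "a \<in> A" "x \<in> A" using Aeq by auto
      ultimately show ?thesis using nice[OF A w(2), of a x] dis by blast
    qed
  qed
  show False using nice[OF xyp pqx, of x p] dis by simp
qed

lemma main:
  assumes A: "A \<in> C1" and B: "B \<in> C2"
  shows good
proof -
  have fA: "finite A" using c1[OF A] fin finite_subset by blast
  consider "card (A \<inter> B) = 0" | "card (A \<inter> B) = 1" | "2 \<le> card (A \<inter> B)" by linarith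
  thus ?thesis
  proof cases
    case 1
    hence e: "A \<inter> B = {}" using fA by simp
    obtain p where p: "p \<in> B" using c2[OF B] by (auto simp: card_3_iff)
    have "p \<notin> A" "p \<in> U" using e p c2[OF B] by auto
    then obtain w where w: "w \<in> A" "insert p (A - {w}) \<in> C1" using e1[OF A] by blast
    have "insert p (A - {w}) \<inter> B = {p}" using e p by auto
    thus ?thesis using case1[OF w(2) B] by simp
  next
    case 2 thus ?thesis using case1 A B by blast
  next
    case 3 thus ?thesis using A B good_def by blast
  qed
qed
end
lemma cyc_exch:
  fixes Z :: "nat set \<Rightarrow> 'a::field"
  assumes cy: "is_cycle n d Z" and nz: "Z \<sigma> \<noteq> 0" and v: "v \<in> \<sigma>"
  shows "\<exists>\<sigma>'. Z \<sigma>' \<noteq> 0 \<and> \<sigma>' \<noteq> \<sigma> \<and> \<sigma> - {v} \<subseteq> \<sigma>'"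
proof (rule ccontr)
  assume na: "\<not> ?thesis"
  let ?\<tau> = "\<sigma> - {v}"
  have sig: "\<sigma> \<in> simplices n d" using cy nz unfolding is_cycle_def is_chain_def by blast
  have finS: "finite (simplices n d)" unfolding simplices_def
    by (rule finite_subset[of _ "Pow {1..n}"]) auto
  have fs: "finite \<sigma>" using sig unfolding simplices_def using finite_subset by blast
  let ?f = "\<lambda>\<sigma>'. \<Sum>i<card \<sigma>'. (if \<sigma>' - {sorted_list_of_set \<sigma>' ! i} = ?\<tau>
                     then (-1) ^ i * Z \<sigma>' else (0::'a))"
  have b0: "boundary n d Z ?\<tau> = 0" using cy unfolding is_cycle_def by blast
  have rest: "?f \<sigma>' = 0" if "\<sigma>' \<in> simplices n d - {\<sigma>}" for \<sigma>'
  proof (cases "Z \<sigma>' = 0")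
    case True thus ?thesis by (intro sum.neutral) simp
  next
    case False
    have "\<sigma>' - {sorted_list_of_set \<sigma>' ! i} \<noteq> ?\<tau>" for i
      using na False that by blast
    thus ?thesis by simp
  qed
  have "boundary n d Z ?\<tau> = ?f \<sigma> + (\<Sum>\<sigma>'\<in>simplices n d - {\<sigma>}. ?f \<sigma>')"
    unfolding boundary_def using sum.remove[OF finS sig, of ?f] by simp
  also have "(\<Sum>\<sigma>'\<in>simplices n d - {\<sigma>}. ?f \<sigma>') = 0" using rest by simp
  finally have f0: "?f \<sigma> = 0" using b0 by simp
  define s where "s = sorted_list_of_set \<sigma>"
  have ds: "distinct s" and ls: "length s = card \<sigma>" and ss: "set s = \<sigma>"
    using fs unfolding s_def by auto
  obtain i0 where i0: "i0 < length s" "s ! i0 = v" using v ss by (metis in_set_conv_nth)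
  have eq: "(\<sigma> - {s ! i} = ?\<tau>) = (i = i0)" if "i < card \<sigma>" for i
  proof
    assume h: "\<sigma> - {s ! i} = ?\<tau>"
    have "s ! i \<in> \<sigma>" using that ls ss nth_mem by metis
    hence "s ! i = v" using h v by blast
    thus "i = i0" using i0 ds that ls nth_eq_iff_index_eq by metis
  next
    assume "i = i0" thus "\<sigma> - {s ! i} = ?\<tau>" using i0 by simp
  qed
  have "?f \<sigma> = (\<Sum>i<card \<sigma>. (if i = i0 then (-1) ^ i * Z \<sigma> else 0))"
    unfolding s_def[symmetric] by (rule sum.cong) (use eq in auto)
  also have "\<dots> = (-1) ^ i0 * Z \<sigma>" using i0 ls by (simp add: sum.delta)
  finally have "(-1) ^ i0 * Z \<sigma> = 0" using f0 by simp
  thus False using nz by simp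
qed

lemma chain_simp:
  assumes "is_cycle n d Z" "Z s \<noteq> 0"
  shows "s \<subseteq> {1..n} \<and> card s = d + 1"
  using assms unfolding is_cycle_def is_chain_def simplices_def by blast

lemma compl_exch:
  fixes Z :: "nat set \<Rightarrow> 'a::field"
  assumes cy: "is_cycle n d Z" and A: "A \<in> (\<lambda>\<sigma>. {1..n} - \<sigma>) ` supp Z"
    and vA: "v \<notin> A" and vU: "v \<in> {1..n}"
  shows "\<exists>w\<in>A. insert v (A - {w}) \<in> (\<lambda>\<sigma>. {1..n} - \<sigma>) ` supp Z"
proof -
  obtain \<sigma> where s: "Z \<sigma> \<noteq> 0" "A = {1..n} - \<sigma>" using A unfolding supp_def by auto
  have v: "v \<in> \<sigma>" using s(2) vA vU by simp
  obtain \<sigma>' where s': "Z \<sigma>' \<noteq> 0" "\<sigma>' \<noteq> \<sigma>" "\<sigma> - {v} \<subseteq> \<sigma>'" using cyc_exch[OF cy s(1) v] by blast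
  have p: "\<sigma> \<subseteq> {1..n}" "card \<sigma> = d + 1" using chain_simp[OF cy s(1)] by auto
  have p': "\<sigma>' \<subseteq> {1..n}" "card \<sigma>' = d + 1" using chain_simp[OF cy s'(1)] by auto
  have f: "finite \<sigma>" "finite \<sigma>'" using finite_subset[OF p(1)] finite_subset[OF p'(1)] by auto
  have c: "card (\<sigma> - {v}) = d" using p v f by simp
  have "card (\<sigma>' - (\<sigma> - {v})) = card \<sigma>' - card (\<sigma> - {v})"
    by (rule card_Diff_subset) (use f s'(3) in auto)
  hence "card (\<sigma>' - (\<sigma> - {v})) = 1" using p'(2) c by simp
  then obtain w where w: "\<sigma>' - (\<sigma> - {v}) = {w}" by (rule card_1_singletonE)
  have w0: "w \<in> \<sigma>' - (\<sigma> - {v})" using w by simp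
  hence w1: "w \<in> \<sigma>'" "w \<notin> \<sigma> - {v}" by blast+
  have se: "\<sigma>' = insert w (\<sigma> - {v})" using w s'(3) by auto
  have wv: "w \<noteq> v"
  proof
    assume "w = v" hence "\<sigma>' = \<sigma>" using se v by auto
    thus False using s' by simp
  qed
  have wA: "w \<in> A" using w1 wv p'(1) s(2) by auto
  have "insert v (A - {w}) = {1..n} - \<sigma>'" unfolding se s(2) using wv v vU by auto
  hence "insert v (A - {w}) \<in> (\<lambda>\<sigma>. {1..n} - \<sigma>) ` supp Z" using s'(1) unfolding supp_def by auto
  thus ?thesis using wA by blast
qed

theorem mainTheorem13:
  fixes d :: nat and Z1 Z2 :: "nat set \<Rightarrow> 'a::field"
  assumes "d \<ge> 1"
    and "is_cycle (d + 4) d Z1" and "is_cycle (d + 4) d Z2"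
    and "\<exists>s. Z1 s \<noteq> 0" and "\<exists>s. Z2 s \<noteq> 0"
  shows "\<exists>\<tau>\<in>simplices (d + 4) (d - 1). \<tau> \<in> K (supp Z1) \<and> \<tau> \<in> K (supp Z2)"
proof -
  let ?U = "{1..d+4}"
  let ?C1 = "(\<lambda>\<sigma>. ?U - \<sigma>) ` supp Z1"
  let ?C2 = "(\<lambda>\<sigma>. ?U - \<sigma>) ` supp Z2"
  have cc: "card A = 3 \<and> A \<subseteq> ?U" if hA: "A \<in> (\<lambda>\<sigma>. ?U - \<sigma>) ` supp Z" and hc: "is_cycle (d+4) d Z"
    for A and Z :: "nat set \<Rightarrow> 'a"
  proof -
    obtain \<sigma> where s: "Z \<sigma> \<noteq> 0" "A = ?U - \<sigma>" using hA unfolding supp_def by blast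
    have p: "\<sigma> \<subseteq> ?U" "card \<sigma> = d + 1" using chain_simp[OF hc s(1)] by auto
    hence "card A = 3" using s(2) by (simp add: card_Diff_subset finite_subset)
    thus ?thesis using s by auto
  qed
  interpret exch ?U ?C1 ?C2
  proof (unfold_locales)
    show "finite ?U" by simp
  next
    fix A assume "A \<in> ?C1" thus "card A = 3 \<and> A \<subseteq> ?U" using cc assms(2) by blast
  next
    fix A assume "A \<in> ?C2" thus "card A = 3 \<and> A \<subseteq> ?U" using cc assms(3) by blast
  next
    fix A v assume "A \<in> ?C1" "v \<notin> A" "v \<in> ?U"
    thus "\<exists>w\<in>A. insert v (A - {w}) \<in> ?C1" by (rule compl_exch[OF assms(2)])
  next
    fix A v assume "A \<in> ?C2" "v \<notin> A" "v \<in> ?U"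
    thus "\<exists>w\<in>A. insert v (A - {w}) \<in> ?C2" by (rule compl_exch[OF assms(3)])
  qed
  obtain s1 where s1: "Z1 s1 \<noteq> 0" using assms(4) by blast
  obtain s2 where s2: "Z2 s2 \<noteq> 0" using assms(5) by blast
  have "good" using main[of "?U - s1" "?U - s2"] s1 s2 unfolding supp_def by blast
  hence "\<exists>A\<in>?C1. \<exists>B\<in>?C2. 2 \<le> card (A \<inter> B)" using good_def by blast
  then obtain \<sigma>1 \<sigma>2 where g: "Z1 \<sigma>1 \<noteq> 0" "Z2 \<sigma>2 \<noteq> 0" "2 \<le> card ((?U - \<sigma>1) \<inter> (?U - \<sigma>2))"
    unfolding good_def supp_def by auto
  have p1: "\<sigma>1 \<subseteq> ?U" "card \<sigma>1 = d + 1" using chain_simp[OF assms(2) g(1)] by auto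
  have p2: "\<sigma>2 \<subseteq> ?U" "card \<sigma>2 = d + 1" using chain_simp[OF assms(3) g(2)] by auto
  have c1: "card (?U - \<sigma>1) = 3" using p1 by (simp add: card_Diff_subset finite_subset)
  have c2: "card (?U - \<sigma>2) = 3" using p2 by (simp add: card_Diff_subset finite_subset)
  have "card ((?U - \<sigma>1) \<union> (?U - \<sigma>2)) + card ((?U - \<sigma>1) \<inter> (?U - \<sigma>2)) = 6"
    using card_Un_Int[of "?U - \<sigma>1" "?U - \<sigma>2"] c1 c2 by simp
  hence cu: "card ((?U - \<sigma>1) \<union> (?U - \<sigma>2)) \<le> 4" using g(3) by linarith
  have ieq: "\<sigma>1 \<inter> \<sigma>2 = ?U - ((?U - \<sigma>1) \<union> (?U - \<sigma>2))" using p1 p2 by blast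
  have "card (?U - ((?U - \<sigma>1) \<union> (?U - \<sigma>2))) = d + 4 - card ((?U - \<sigma>1) \<union> (?U - \<sigma>2))"
    by (subst card_Diff_subset) auto
  hence "d \<le> card (\<sigma>1 \<inter> \<sigma>2)" using cu ieq by simp
  then obtain \<tau> where t: "\<tau> \<subseteq> \<sigma>1 \<inter> \<sigma>2" "card \<tau> = d" using obtain_subset_with_card_n by blast
  have "\<tau> \<in> simplices (d + 4) (d - 1)" using t p1 assms(1) unfolding simplices_def by auto
  moreover have "\<tau> \<in> K (supp Z1)" "\<tau> \<in> K (supp Z2)" using t g unfolding K_def supp_def by auto
  ultimately show ?thesis by blast
qed

end
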